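(* Let $(\mathcal{A},\{\mu_n\}_{n\ge1})$ be an $A_\infty$-algebra and $(\mathcal{M},\{\nu_n\}_{n\ge1})$ a representation of it. A degree $0$ linear map $\mathcal{R}:\mathcal{M}\to\mathcal{A}$ is a strict homotopy relative Rota–Baxter operator if and only if the map $\widetilde{\mathcal{R}}:\mathcal{A}\oplus\mathcal{M}\to\mathcal{A}\oplus\mathcal{M}$, $\widetilde{\mathcal{R}}(a,u)=(\mathcal{R}(u),0)$, is a strict homotopy Nijenhuis operator on the semidirect product $A_\infty$-algebra $(\mathcal{A}\oplus\mathcal{M},\{\mu_n^\ltimes\}_{n\ge1})$.
   Context: Over a field of characteristic $0$. An $A_\infty$-algebra is a graded vector space $\mathcal{A}=\bigoplus_{i\in\mathbb{Z}}\mathcal{A}_i$ with graded linear maps $\mu_n:\mathcal{A}^{\otimes n}\to\mathcal{A}$ of degree $n-2$ such that for each $k\ge1$ and homogeneous $a_1,\dots,a_k$: $\sum_{m+n=k+1}\sum_{i=1}^m(-1)^{i(n+1)+n(|a_1|+\cdots+|a_{i-1}|)}\mu_m(a_1,\dots,a_{i-1},\mu_n(a_i,\dots,a_{i+n-1}),a_{i+n},\dots,a_k)=0$. A representation is a graded vector space $\mathcal{M}$ with maps $\nu_n:\bigoplus_{r=1}^n(\mathcal{A}^{\otimes r-1}\otimes\mathcal{M}\otimes\mathcal{A}^{\otimes n-r})\to\mathcal{M}$ of degree $n-2$ satisfying the same identities whenever exactly one argument lies in $\mathcal{M}$ (with the operations applied to an argument containing that element replaced by $\nu$). The semidirect product is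 $\mu_n^\ltimes((a_1,u_1),\dots,(a_n,u_n))=(\mu_n(a_1,\dots,a_n),\sum_{r=1}^n\nu_n(a_1,\dots,u_r,\dots,a_n))$, an $A_\infty$-algebra. A degree $0$ map $\mathcal{R}:\mathcal{M}\to\mathcal{A}$ is a strict homotopy relative Rota–Baxter operator if $\mu_n(\mathcal{R}u_1,\dots,\mathcal{R}u_n)=\sum_{r=1}^n\mathcal{R}(\nu_n(\mathcal{R}u_1,\dots,u_r,\dots,\mathcal{R}u_n))$ for all $n\ge1$ and homogeneous $u_i$. On an $A_\infty$-algebra $(\mathcal{B},\{m_n\})$ a degree $0$ linear map $\mathcal{N}$ is a strict homotopy Nijenhuis operator if for all $n\ge1$ and homogeneous $b_1,\dots,b_n$: $m_n(\mathcal{N}b_1,\dots,\mathcal{N}b_n)=\sum_{k=1}^n(-1)^{k-1}\mathcal{N}^k\Big(\sum_{S\subseteq\{1..n\},|S|=k}m_n(c^S_1,\dots,c^S_n)\Big)$ where $c^S_i=b_i$ if $i\in S$ and $c^S_i=\mathcal{N}(b_i)$ if $i\notin S$. *)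

theory Defs
  imports Complex_Main "HOL-Library.Product_Plus"
begin

definition graded_vs :: "('k::field \<Rightarrow> 'a::ab_group_add \<Rightarrow> 'a) \<Rightarrow> (int \<Rightarrow> 'a set) \<Rightarrow> bool" where
  "graded_vs s G \<longleftrightarrow>
     Vector_Spaces.vector_space s \<and>
     (\<forall>i. 0 \<in> G i \<and> (\<forall>x\<in>G i. \<forall>y\<in>G i. x + y \<in> G i) \<and> (\<forall>c. \<forall>x\<in>G i. s c x \<in> G i)) \<and>
     (\<forall>x. \<exists>f. finite {i. f i \<noteq> 0} \<and> (\<forall>i. f i \<in> G i) \<and> x = (\<Sum>i\<in>{i. f i \<noteq> 0}. f i)) \<and>
     (\<forall>f. finite {i. f i \<noteq> 0} \<and> (\<forall>i. f i \<in> G i) \<and> (\<Sum>i\<in>{i. f i \<noteq> 0}. f i) = 0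
          \<longrightarrow> (\<forall>i. f i = 0))"

definition homog :: "(int \<Rightarrow> 'a set) \<Rightarrow> int list \<Rightarrow> 'a list \<Rightarrow> bool" where
  "homog G ds xs \<longleftrightarrow> length ds = length xs \<and> (\<forall>j<length xs. xs ! j \<in> G (ds ! j))"

definition sgnp :: "int \<Rightarrow> 'c::ab_group_add \<Rightarrow> 'c" where
  "sgnp e x = (if even e then x else - x)"

text \<open>The left-hand side of the k-th A-infinity relation (k = length xs), for an
  operation m acting on argument lists (the arity being the length of the list),
  where the result is read through the map proj.\<close>
definition ainf_sum :: "('b list \<Rightarrow> 'b) \<Rightarrow> ('b \<Rightarrow> 'c::ab_group_add) \<Rightarrow> int list \<Rightarrow> 'b list \<Rightarrow> 'c" where
  "ainf_sum m proj ds xs =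
     (\<Sum>n\<in>{1..length xs}. \<Sum>i\<in>{1..length xs + 1 - n}.
        sgnp (int i * (int n + 1) + int n * sum_list (take (i - 1) ds))
          (proj (m (take (i - 1) xs @ [m (take n (drop (i - 1) xs))] @ drop (i - 1 + n) xs))))"

text \<open>mu xs is mu_n(x_1,...,x_n) with n = length xs (only n \<ge> 1 is relevant).\<close>
definition ainf_algebra ::
  "('k::field \<Rightarrow> 'a::ab_group_add \<Rightarrow> 'a) \<Rightarrow> (int \<Rightarrow> 'a set) \<Rightarrow> ('a list \<Rightarrow> 'a) \<Rightarrow> bool" where
  "ainf_algebra s G mu \<longleftrightarrow>
     graded_vs s G \<and>
     (\<forall>pre post. Vector_Spaces.linear s s (\<lambda>x. mu (pre @ [x] @ post))) \<and>
     (\<forall>ds xs. homog G ds xs \<and> xs \<noteq> [] \<longrightarrow> mu xs \<in> G (sum_list ds + int (length xs) - 2)) \<and>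
     (\<forall>ds xs. homog G ds xs \<and> xs \<noteq> [] \<longrightarrow> ainf_sum mu id ds xs = 0)"

definition isR :: "'a + 'm \<Rightarrow> bool" where "isR = case_sum (\<lambda>_. False) (\<lambda>_. True)"
definition prL :: "'a::zero + 'm \<Rightarrow> 'a" where "prL = case_sum id (\<lambda>_. 0)"
definition prR :: "'a + 'm::zero \<Rightarrow> 'm" where "prR = case_sum (\<lambda>_. 0) id"

text \<open>nu pre u post is nu_n(a_1,...,a_{r-1},u,a_{r+1},...,a_n) with pre = [a_1..a_{r-1}],
  post = [a_{r+1}..a_n].  The combined operation on lists of elements of A or M:
  mu if no argument lies in M, nu if (exactly) one argument lies in M.\<close>
definition mixop :: "('a::zero list \<Rightarrow> 'a) \<Rightarrow> ('a list \<Rightarrow> 'm::zero \<Rightarrow> 'a list \<Rightarrow> 'm)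
    \<Rightarrow> ('a + 'm) list \<Rightarrow> 'a + 'm" where
  "mixop mu nu xs =
     (let P = filter (\<lambda>i. isR (xs ! i)) [0..<length xs] in
      if P = [] then Inl (mu (map prL xs))
      else Inr (nu (map prL (take (hd P) xs)) (prR (xs ! hd P)) (map prL (drop (Suc (hd P)) xs))))"

definition homog_mix :: "(int \<Rightarrow> 'a set) \<Rightarrow> (int \<Rightarrow> 'm set) \<Rightarrow> int list \<Rightarrow> ('a + 'm) list \<Rightarrow> bool" where
  "homog_mix GA GM ds xs \<longleftrightarrow> length ds = length xs \<and>
     (\<forall>j<length xs. case xs ! j of Inl a \<Rightarrow> a \<in> GA (ds ! j) | Inr u \<Rightarrow> u \<in> GM (ds ! j))"

definition ainf_rep ::
  "('k::field \<Rightarrow> 'a::ab_group_add \<Rightarrow> 'a) \<Rightarrow> (int \<Rightarrow> 'a set) \<Rightarrow> ('a list \<Rightarrow> 'a) \<Rightarrow>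
   ('k \<Rightarrow> 'm::ab_group_add \<Rightarrow> 'm) \<Rightarrow> (int \<Rightarrow> 'm set) \<Rightarrow> ('a list \<Rightarrow> 'm \<Rightarrow> 'a list \<Rightarrow> 'm) \<Rightarrow> bool" where
  "ainf_rep sA GA mu sM GM nu \<longleftrightarrow>
     graded_vs sM GM \<and>
     (\<forall>pre post. Vector_Spaces.linear sM sM (\<lambda>v. nu pre v post)) \<and>
     (\<forall>pre1 pre2 u post. Vector_Spaces.linear sA sM (\<lambda>x. nu (pre1 @ [x] @ pre2) u post)) \<and>
     (\<forall>pre u post1 post2. Vector_Spaces.linear sA sM (\<lambda>x. nu pre u (post1 @ [x] @ post2))) \<and>
     (\<forall>ds1 pre d u ds2 post. homog GA ds1 pre \<and> u \<in> GM d \<and> homog GA ds2 post \<longrightarrow>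
        nu pre u post \<in> GM (sum_list ds1 + d + sum_list ds2 + int (length pre + 1 + length post) - 2)) \<and>
     (\<forall>ds xs. homog_mix GA GM ds xs \<and> length (filter isR xs) = 1 \<longrightarrow>
        ainf_sum (mixop mu nu) prR ds xs = 0)"

definition sd_scale :: "('k \<Rightarrow> 'a \<Rightarrow> 'a) \<Rightarrow> ('k \<Rightarrow> 'm \<Rightarrow> 'm) \<Rightarrow> 'k \<Rightarrow> 'a \<times> 'm \<Rightarrow> 'a \<times> 'm" where
  "sd_scale sA sM c p = (sA c (fst p), sM c (snd p))"

definition sd_grading :: "(int \<Rightarrow> 'a set) \<Rightarrow> (int \<Rightarrow> 'm set) \<Rightarrow> int \<Rightarrow> ('a \<times> 'm) set" where
  "sd_grading GA GM i = GA i \<times> GM i"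

definition sd_mu :: "('a list \<Rightarrow> 'a) \<Rightarrow> ('a list \<Rightarrow> 'm::comm_monoid_add \<Rightarrow> 'a list \<Rightarrow> 'm)
   \<Rightarrow> ('a \<times> 'm) list \<Rightarrow> 'a \<times> 'm" where
  "sd_mu mu nu xs = (mu (map fst xs),
     (\<Sum>r<length xs. nu (map fst (take r xs)) (snd (xs ! r)) (map fst (drop (Suc r) xs))))"

definition degree0_linear :: "('k::field \<Rightarrow> 'b::ab_group_add \<Rightarrow> 'b) \<Rightarrow> (int \<Rightarrow> 'b set) \<Rightarrow> ('k \<Rightarrow> 'c::ab_group_add \<Rightarrow> 'c) \<Rightarrow> (int \<Rightarrow> 'c set)
   \<Rightarrow> ('b \<Rightarrow> 'c) \<Rightarrow> bool" where
  "degree0_linear s1 G1 s2 G2 f \<longleftrightarrow> Vector_Spaces.linear s1 s2 f \<and> (\<forall>i. f ` G1 i \<subseteq> G2 i)"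

definition strict_rel_RB ::
  "('k::field \<Rightarrow> 'a::ab_group_add \<Rightarrow> 'a) \<Rightarrow> (int \<Rightarrow> 'a set) \<Rightarrow> ('a list \<Rightarrow> 'a) \<Rightarrow>
   ('k \<Rightarrow> 'm::ab_group_add \<Rightarrow> 'm) \<Rightarrow> (int \<Rightarrow> 'm set) \<Rightarrow> ('a list \<Rightarrow> 'm \<Rightarrow> 'a list \<Rightarrow> 'm) \<Rightarrow>
   ('m \<Rightarrow> 'a) \<Rightarrow> bool" where
  "strict_rel_RB sA GA mu sM GM nu R \<longleftrightarrow>
     degree0_linear sM GM sA GA R \<and>
     (\<forall>ds us. homog GM ds us \<and> us \<noteq> [] \<longrightarrow>
        mu (map R us) =
        (\<Sum>r<length us. R (nu (map R (take r us)) (us ! r) (map R (drop (Suc r) us)))))"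

definition strict_nijenhuis ::
  "('k::field \<Rightarrow> 'b::ab_group_add \<Rightarrow> 'b) \<Rightarrow> (int \<Rightarrow> 'b set) \<Rightarrow> ('b list \<Rightarrow> 'b) \<Rightarrow> ('b \<Rightarrow> 'b) \<Rightarrow> bool" where
  "strict_nijenhuis s G m N \<longleftrightarrow>
     degree0_linear s G s G N \<and>
     (\<forall>ds bs. homog G ds bs \<and> bs \<noteq> [] \<longrightarrow>
        m (map N bs) =
        (\<Sum>k\<in>{1..length bs}. sgnp (int k - 1) ((N ^^ k)
            (\<Sum>S\<in>{S. S \<subseteq> {..<length bs} \<and> card S = k}.
               m (map (\<lambda>i. if i \<in> S then bs ! i else N (bs ! i)) [0..<length bs])))))"

end

theory Submission
  imports Defs
begin

lemma lin_facts:
  assumes "Vector_Spaces.linear s1 s2 f"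
  shows "f 0 = 0" "\<And>g S. f (sum g S) = (\<Sum>a\<in>S. f (g a))" "\<And>x y. f (x + y) = f x + f y"
proof -
  have h: "module_hom s1 s2 f" using assms by (simp add: linear_iff_module_hom)
  show "f 0 = 0" using module_hom.zero[OF h] .
  show "\<And>g S. f (sum g S) = (\<Sum>a\<in>S. f (g a))" using module_hom.sum[OF h] .
  show "\<And>x y. f (x + y) = f x + f y" using module_hom.add[OF h] .
qed

lemma key_snd:
  fixes R :: "'m::ab_group_add \<Rightarrow> 'a::ab_group_add" and bs :: "('a \<times> 'm) list"
  assumes nu0: "\<And>pre post. nu pre 0 post = (0::'m)"
    and j: "j < length bs"
  shows "snd (sd_mu mu nu (map (\<lambda>i. if i = j then bs ! i else (\<lambda>(a, u). (R u, 0)) (bs ! i)) [0..<length bs]))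
     = nu (map R (take j (map snd bs))) (map snd bs ! j) (map R (drop (Suc j) (map snd bs)))"
proof -
  let ?xs = "map (\<lambda>i. if i = j then bs ! i else (\<lambda>(a, u). (R u, 0)) (bs ! i)) [0..<length bs]"
  have "\<And>r. r < length bs \<Longrightarrow> nu (map fst (take r ?xs)) (snd (?xs ! r)) (map fst (drop (Suc r) ?xs))
     = (if r = j then nu (map R (take j (map snd bs))) (map snd bs ! j) (map R (drop (Suc j) (map snd bs))) else 0)"
  proof -
    fix r assume r: "r < length bs"
    show "?thesis r"
    proof (cases "r = j")
      case True
      have e1: "map fst (take r ?xs) = map R (take j (map snd bs))"
        by (rule nth_equalityI) (use True j in \<open>auto simp: split_beta\<close>)
      have e2: "map fst (drop (Suc r) ?xs) = map R (drop (Suc j) (map snd bs))"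
        by (rule nth_equalityI) (use True j in \<open>auto simp: split_beta\<close>)
      show ?thesis using True e1 e2 j by simp
    next
      case False
      then show ?thesis using r nu0 by (simp add: split_beta)
    qed
  qed
  then have "(\<Sum>r<length bs. nu (map fst (take r ?xs)) (snd (?xs ! r)) (map fst (drop (Suc r) ?xs)))
     = (\<Sum>r<length bs. (if r = j then nu (map R (take j (map snd bs))) (map snd bs ! j) (map R (drop (Suc j) (map snd bs))) else 0))"
    by (intro sum.cong) auto
  also have "\<dots> = nu (map R (take j (map snd bs))) (map snd bs ! j) (map R (drop (Suc j) (map snd bs)))"
    using j by simp
  finally show ?thesis by (simp add: sd_mu_def)
qed


lemma card1_sets: "{S. S \<subseteq> {..<n} \<and> card S = 1} = (\<lambda>j. {j}) ` {..<(n::nat)}"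
  by (auto simp: card_Suc_eq)

lemma Npow:
  fixes R :: "'m::ab_group_add \<Rightarrow> 'a::ab_group_add"
  assumes R0: "R 0 = 0" and k: "k \<ge> 2"
  shows "((\<lambda>(a::'a, u::'m). (R u, 0::'m)) ^^ k) x = 0"
proof -
  obtain j where kj: "k = Suc (Suc j)" using k by (metis add_2_eq_Suc le_Suc_ex)
  show ?thesis unfolding kj by (simp add: split_beta R0 zero_prod_def)
qed

lemma nij_rhs:
  fixes R :: "'m::ab_group_add \<Rightarrow> 'a::ab_group_add" and bs :: "('a \<times> 'm) list"
  assumes nu0: "\<And>pre post. nu pre 0 post = (0::'m)"
    and R0: "R 0 = 0" and Rsum: "\<And>g (S::nat set). R (sum g S) = (\<Sum>a\<in>S. R (g a))"
    and ne: "bs \<noteq> []"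
  shows "(\<Sum>k\<in>{1..length bs}. sgnp (int k - 1) (((\<lambda>(a, u). (R u, 0::'m)) ^^ k)
            (\<Sum>S\<in>{S. S \<subseteq> {..<length bs} \<and> card S = k}.
               sd_mu mu nu (map (\<lambda>i. if i \<in> S then bs ! i else (\<lambda>(a, u). (R u, 0)) (bs ! i)) [0..<length bs]))))
    = (\<Sum>r<length bs. R (nu (map R (take r (map snd bs))) (map snd bs ! r) (map R (drop (Suc r) (map snd bs)))), 0)"
  (is "(\<Sum>k\<in>_. ?T k) = _")
proof -
  let ?N = "\<lambda>(a::'a, u::'m). (R u, 0::'m)"
  have split: "{1..length bs} = insert 1 {2..length bs}" using ne by (cases bs) auto
  have z: "\<And>k. k \<in> {2..length bs} \<Longrightarrow> ?T k = 0"
  proof -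
    fix k assume "k \<in> {2..length bs}"
    then have k2: "k \<ge> 2" by simp
    show "?T k = 0" unfolding sgnp_def Npow[of R, OF R0 k2] by simp
  qed
  have "(\<Sum>k\<in>{1..length bs}. ?T k) = ?T 1 + (\<Sum>k\<in>{2..length bs}. ?T k)"
    unfolding split by (subst sum.insert) auto
  also have "(\<Sum>k\<in>{2..length bs}. ?T k) = 0" using z by simp
  also have "?T 1 = ?N (\<Sum>S\<in>{S. S \<subseteq> {..<length bs} \<and> card S = 1}.
               sd_mu mu nu (map (\<lambda>i. if i \<in> S then bs ! i else ?N (bs ! i)) [0..<length bs]))"
    by (simp add: sgnp_def)
  also have "(\<Sum>S\<in>{S. S \<subseteq> {..<length bs} \<and> card S = 1}.
               sd_mu mu nu (map (\<lambda>i. if i \<in> S then bs ! i else ?N (bs ! i)) [0..<length bs]))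
     = (\<Sum>j<length bs. sd_mu mu nu (map (\<lambda>i. if i = j then bs ! i else ?N (bs ! i)) [0..<length bs]))"
    unfolding card1_sets by (subst sum.reindex) (auto simp: inj_on_def)
  finally have "(\<Sum>k\<in>{1..length bs}. ?T k) = ?N (\<Sum>j<length bs. sd_mu mu nu (map (\<lambda>i. if i = j then bs ! i else ?N (bs ! i)) [0..<length bs]))"
    by simp
  also have "\<dots> = (R (\<Sum>j<length bs. snd (sd_mu mu nu (map (\<lambda>i. if i = j then bs ! i else ?N (bs ! i)) [0..<length bs]))), 0)"
    by (simp add: split_beta snd_sum)
  also have "\<dots> = (R (\<Sum>j<length bs. nu (map R (take j (map snd bs))) (map snd bs ! j) (map R (drop (Suc j) (map snd bs)))), 0)"
    using key_snd[of nu, OF nu0] by (metis (no_types, lifting) lessThan_iff sum.cong)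
  also have "\<dots> = (\<Sum>r<length bs. R (nu (map R (take r (map snd bs))) (map snd bs ! r) (map R (drop (Suc r) (map snd bs)))), 0)"
    by (simp only: Rsum[of "\<lambda>j. nu (map R (take j (map snd bs))) (map snd bs ! j) (map R (drop (Suc j) (map snd bs)))"])
  finally show ?thesis by simp
qed

lemma nij_lhs:
  fixes R :: "'m::ab_group_add \<Rightarrow> 'a::ab_group_add" and bs :: "('a \<times> 'm) list"
  assumes nu0: "\<And>pre post. nu pre 0 post = (0::'m)"
  shows "sd_mu mu nu (map (\<lambda>(a, u). (R u, 0)) bs) = (mu (map R (map snd bs)), 0)"
  unfolding sd_mu_def by (simp add: split_beta comp_def nu0)


lemma vs_prod:
  assumes "Vector_Spaces.vector_space sA" "Vector_Spaces.vector_space sM"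
  shows "Vector_Spaces.vector_space (sd_scale sA sM)"
  using assms unfolding vector_space_def sd_scale_def by (auto simp: prod_eq_iff)

theorem proposition6p11:
  fixes sA :: "'k::field_char_0 \<Rightarrow> 'a::ab_group_add \<Rightarrow> 'a"
    and GA :: "int \<Rightarrow> 'a set"
    and mu :: "'a list \<Rightarrow> 'a"
    and sM :: "'k \<Rightarrow> 'm::ab_group_add \<Rightarrow> 'm"
    and GM :: "int \<Rightarrow> 'm set"
    and nu :: "'a list \<Rightarrow> 'm \<Rightarrow> 'a list \<Rightarrow> 'm"
    and R :: "'m \<Rightarrow> 'a"
  assumes "ainf_algebra sA GA mu"
    and "ainf_rep sA GA mu sM GM nu"
    and "degree0_linear sM GM sA GA R"
  shows "strict_rel_RB sA GA mu sM GM nu R \<longleftrightarrow>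
         strict_nijenhuis (sd_scale sA sM) (sd_grading GA GM) (sd_mu mu nu)
           (\<lambda>(a, u). (R u, 0))"
proof -
  have gA: "graded_vs sA GA" using assms(1) by (simp add: ainf_algebra_def)
  have gM: "graded_vs sM GM" using assms(2) by (simp add: ainf_rep_def)
  have vA: "Vector_Spaces.vector_space sA" and GA0: "\<And>i. 0 \<in> GA i"
    using gA by (auto simp: graded_vs_def)
  have vM: "Vector_Spaces.vector_space sM" and GM0: "\<And>i. 0 \<in> GM i"
    using gM by (auto simp: graded_vs_def)
  have lR: "Vector_Spaces.linear sM sA R" and RG: "\<And>i. R ` GM i \<subseteq> GA i"
    using assms(3) by (auto simp: degree0_linear_def)
  have nu0: "\<And>pre post. nu pre 0 post = 0"
  proof -
    fix pre post
    have "Vector_Spaces.linear sM sM (\<lambda>v. nu pre v post)" using assms(2) by (simp add: ainf_rep_def)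
    from lin_facts(1)[OF this] show "nu pre 0 post = 0" by simp
  qed
  have R0: "R 0 = 0" using lin_facts(1)[OF lR] .
  have Rsum: "\<And>g (S::nat set). R (sum g S) = (\<Sum>a\<in>S. R (g a))" using lin_facts(2)[OF lR] .
  have Radd: "\<And>x y. R (x + y) = R x + R y" using lin_facts(3)[OF lR] .
  have Rscale: "\<And>c x. R (sM c x) = sA c (R x)"
    using lR by (simp add: linear_iff_module_hom module_hom.scale)
  have sM0: "\<And>c. sM c 0 = 0"
    using vM by (simp add: module.scale_zero_right module_iff_vector_space)
  have eqv: "
     (sd_mu mu nu (map (\<lambda>(a, u). (R u, 0)) bs) =
        (\<Sum>k\<in>{1..length bs}. sgnp (int k - 1) (((\<lambda>(a, u). (R u, 0::'m)) ^^ k)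
            (\<Sum>S\<in>{S. S \<subseteq> {..<length bs} \<and> card S = k}.
               sd_mu mu nu (map (\<lambda>i. if i \<in> S then bs ! i else (\<lambda>(a, u). (R u, 0)) (bs ! i)) [0..<length bs])))))
     \<longleftrightarrow> mu (map R (map snd bs)) = (\<Sum>r<length (map snd bs). R (nu (map R (take r (map snd bs))) (map snd bs ! r) (map R (drop (Suc r) (map snd bs)))))"
    if ne: "bs \<noteq> []" for bs
    unfolding nij_lhs[of nu, OF nu0] nij_rhs[of nu, OF nu0 R0 Rsum ne] prod.inject by simp
  have lin: "Vector_Spaces.linear (sd_scale sA sM) (sd_scale sA sM) (\<lambda>(a::'a, u::'m). (R u, 0::'m))"
  proof -
    have vP: "Vector_Spaces.vector_space (sd_scale sA sM)" using vs_prod[OF vA vM] .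
    show ?thesis
      unfolding Vector_Spaces.linear_def module_hom_axioms_def module_hom_def
      using vP by (auto simp: module_iff_vector_space sd_scale_def split_beta Radd Rscale sM0)
  qed
  have dN: "degree0_linear (sd_scale sA sM) (sd_grading GA GM) (sd_scale sA sM) (sd_grading GA GM) (\<lambda>(a, u). (R u, 0))"
    unfolding degree0_linear_def using lin RG GM0 by (auto simp: sd_grading_def)
  show ?thesis
  proof
    assume RB: "strict_rel_RB sA GA mu sM GM nu R"
    show "strict_nijenhuis (sd_scale sA sM) (sd_grading GA GM) (sd_mu mu nu) (\<lambda>(a, u). (R u, 0))"
      unfolding strict_nijenhuis_def
    proof (intro conjI dN allI impI)
      fix ds bs assume h: "homog (sd_grading GA GM) ds bs \<and> bs \<noteq> []"
      then have "homog GM ds (map snd bs) \<and> map snd bs \<noteq> []"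
        by (auto simp: homog_def sd_grading_def mem_Times_iff)
      with RB have "mu (map R (map snd bs)) = (\<Sum>r<length (map snd bs). R (nu (map R (take r (map snd bs))) (map snd bs ! r) (map R (drop (Suc r) (map snd bs)))))"
        unfolding strict_rel_RB_def by blast
      with eqv[of bs] h show "sd_mu mu nu (map (\<lambda>(a, u). (R u, 0)) bs) =
        (\<Sum>k\<in>{1..length bs}. sgnp (int k - 1) (((\<lambda>(a, u). (R u, 0)) ^^ k)
            (\<Sum>S\<in>{S. S \<subseteq> {..<length bs} \<and> card S = k}.
               sd_mu mu nu (map (\<lambda>i. if i \<in> S then bs ! i else (\<lambda>(a, u). (R u, 0)) (bs ! i)) [0..<length bs]))))"
        by blast
    qed
  next
    assume NJ: "strict_nijenhuis (sd_scale sA sM) (sd_grading GA GM) (sd_mu mu nu) (\<lambda>(a, u). (R u, 0))"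
    show "strict_rel_RB sA GA mu sM GM nu R"
      unfolding strict_rel_RB_def
    proof (intro conjI assms(3) allI impI)
      fix ds us assume h: "homog GM ds us \<and> us \<noteq> []"
      define bs where "bs = map (\<lambda>u. (0::'a, u)) us"
      have sb: "map snd bs = us" by (simp add: bs_def comp_def)
      have "homog (sd_grading GA GM) ds bs \<and> bs \<noteq> []"
        using h GA0 by (auto simp: homog_def sd_grading_def bs_def)
      with NJ have "sd_mu mu nu (map (\<lambda>(a, u). (R u, 0)) bs) =
        (\<Sum>k\<in>{1..length bs}. sgnp (int k - 1) (((\<lambda>(a, u). (R u, 0)) ^^ k)
            (\<Sum>S\<in>{S. S \<subseteq> {..<length bs} \<and> card S = k}.
               sd_mu mu nu (map (\<lambda>i. if i \<in> S then bs ! i else (\<lambda>(a, u). (R u, 0)) (bs ! i)) [0..<length bs]))))"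
        unfolding strict_nijenhuis_def by blast
      with eqv[of bs] h have "mu (map R (map snd bs)) = (\<Sum>r<length (map snd bs). R (nu (map R (take r (map snd bs))) (map snd bs ! r) (map R (drop (Suc r) (map snd bs)))))"
        by (simp add: bs_def)
      then show "mu (map R us) = (\<Sum>r<length us. R (nu (map R (take r us)) (us ! r) (map R (drop (Suc r) us))))"
        unfolding sb .
    qed
  qed
qed

end
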